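(* Let $a,a_1\in\mathbb{C}\setminus\{0,1\}$, $a\ne a_1$, and $\alpha,\beta,\gamma\in\mathbb{C}$ with $\gamma$ not a non-positive integer. Take $\varepsilon=-1$, $\varepsilon_1=0$, $\delta=2+\alpha+\beta-\gamma$ (so that $1+\alpha+\beta=\gamma+\delta+\varepsilon+\varepsilon_1$). Let $e_1\in\mathbb{C}$, $e_1\ne 0$ and not a negative integer, satisfy $$a(\alpha-e_1)(\beta-e_1)+(\gamma-1-e_1)e_1=0,$$ and set $$\theta_0=-aa_1\alpha\beta\,\frac{1+e_1}{e_1},\qquad \theta_1=a_1\alpha\beta-\frac{\theta_0}{a_1}.$$ Then $u(z)={}_3F_2(\alpha,\beta,1+e_1;\gamma,e_1;z)$ is a solution of equation (E). Moreover, the accessory parameter $\theta_0$ so defined satisfies $$\frac{\theta_0^2}{a_1^2}+\big(1+a(\alpha+\beta+2\alpha\beta)-\gamma\big)\frac{\theta_0}{a_1}+a\alpha\beta\big(a(1+\alpha)(1+\beta)-\gamma\big)=0.$$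
   Context: Equation (E) is $$\frac{d^2u}{dz^2}+\Big(\frac{\gamma}{z}+\frac{\delta}{z-1}+\frac{\varepsilon}{z-a}+\frac{\varepsilon_1}{z-a_1}\Big)\frac{du}{dz}+\frac{\alpha\beta z^2-\theta_1 z-\theta_0}{z(z-1)(z-a)(z-a_1)}\,u=0 .$$ The generalized hypergeometric series is ${}_rF_s(p_1,\dots,p_r;q_1,\dots,q_s;z)=\sum_{n\ge0}c_nz^n$ with $c_0=1$ and $c_n/c_{n-1}=\frac{1}{n}\prod_{k=1}^r(p_k-1+n)/\prod_{k=1}^s(q_k-1+n)$. *)

theory Defs
  imports "HOL-Analysis.Analysis"
begin

fun hyp_coeff :: "complex list \<Rightarrow> complex list \<Rightarrow> nat \<Rightarrow> complex" where
  "hyp_coeff ps qs 0 = 1"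
| "hyp_coeff ps qs (Suc n) =
     hyp_coeff ps qs n * (\<Prod>p\<leftarrow>ps. p + of_nat n) /
       (of_nat (Suc n) * (\<Prod>q\<leftarrow>qs. q + of_nat n))"

definition hypF :: "complex list \<Rightarrow> complex list \<Rightarrow> complex \<Rightarrow> complex" where
  "hypF ps qs z = (\<Sum>n. hyp_coeff ps qs n * z ^ n)"

end

theory Submission imports Defs begin

definition Tm :: "complex \<Rightarrow> nat \<Rightarrow> complex fps \<Rightarrow> complex fps" where
  "Tm c k F = fps_const c * fps_X ^ k * F"

lemma good_Tm: assumes "fps_conv_radius F \<ge> 1" shows "fps_conv_radius (Tm c k F) \<ge> 1"
proof -
  have "fps_conv_radius (fps_const c * fps_X ^ k) \<ge> min (fps_conv_radius (fps_const c)) (fps_conv_radius (fps_X ^ k :: complex fps))"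
    by (rule fps_conv_radius_mult)
  hence r: "fps_conv_radius (fps_const c * fps_X ^ k) = \<infinity>" by simp
  have "fps_conv_radius (Tm c k F) \<ge> min (fps_conv_radius (fps_const c * fps_X ^ k)) (fps_conv_radius F)"
    unfolding Tm_def by (rule fps_conv_radius_mult)
  with r assms show ?thesis by simp
qed

lemma eval_Tm: assumes "fps_conv_radius F \<ge> 1" "norm z < 1"
  shows "eval_fps (Tm c k F) z = c * z ^ k * eval_fps F z"
proof -
  have "fps_conv_radius (fps_const c * fps_X ^ k) \<ge> min (fps_conv_radius (fps_const c)) (fps_conv_radius (fps_X ^ k :: complex fps))"
    by (rule fps_conv_radius_mult)
  hence r: "fps_conv_radius (fps_const c * fps_X ^ k) = \<infinity>" by simp
  have z: "ereal (norm z) < fps_conv_radius F"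
    by (rule order_less_le_trans[of _ 1]) (use assms in auto)
  show ?thesis unfolding Tm_def
    by (subst eval_fps_mult) (use r z in \<open>auto simp: eval_fps_mult\<close>)
qed

lemma nth_Tm: "fps_nth (Tm c k F) n = c * (if n < k then 0 else fps_nth (F) (n - k))"
  unfolding Tm_def by (simp add: mult.assoc fps_X_power_mult_nth)

lemma good_add: assumes "fps_conv_radius F \<ge> 1" "fps_conv_radius G \<ge> 1"
  shows "fps_conv_radius (F + G) \<ge> 1"
  using fps_conv_radius_add[of F G] assms by (simp add: min_def split: if_splits)

lemma eval_add: assumes "fps_conv_radius F \<ge> 1" "fps_conv_radius G \<ge> 1" "norm z < 1"
  shows "eval_fps (F + G) z = eval_fps F z + eval_fps G z"
proof -
  have "ereal (norm z) < fps_conv_radius F" "ereal (norm z) < fps_conv_radius G"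
    by (rule order_less_le_trans[of _ 1]; use assms in auto)+
  thus ?thesis by (rule eval_fps_add)
qed

lemma A3: "(if Suc m < 3 then 0 else fps_nth (fps_deriv (fps_deriv F)) (Suc m - 3)) = of_nat m * (of_nat m - 1) * (fps_nth F m :: complex)"
proof (cases "m < 2")
  case True thus ?thesis by (auto dest!: less_2_cases simp: numeral_3_eq_3)
next
  case False then obtain k where "m = Suc (Suc k)" by (metis add_2_eq_Suc le_Suc_ex not_less)
  thus ?thesis by (simp add: numeral_3_eq_3 algebra_simps)
qed
lemma A2: "(if Suc m < 2 then 0 else fps_nth (fps_deriv (fps_deriv F)) (Suc m - 2)) = (of_nat m + 1) * of_nat m * (fps_nth F (Suc m) :: complex)"
  by (cases m) (auto simp: algebra_simps numeral_2_eq_2)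
lemma A1: "(if Suc m < 1 then 0 else fps_nth (fps_deriv (fps_deriv F)) (Suc m - 1)) = (of_nat m + 1) * (of_nat m + 2) * (fps_nth F (Suc (Suc m)) :: complex)"
  by (auto simp: algebra_simps)
lemma B2: "(if Suc m < 2 then 0 else fps_nth (fps_deriv F) (Suc m - 2)) = of_nat m * (fps_nth F m :: complex)"
  by (cases m) (auto simp: algebra_simps numeral_2_eq_2)
lemma B1: "(if Suc m < 1 then 0 else fps_nth (fps_deriv F) (Suc m - 1)) = (of_nat m + 1) * (fps_nth F (Suc m) :: complex)"
  by (auto simp: algebra_simps)
lemma B0: "(if Suc m < 0 then 0 else fps_nth (fps_deriv F) (Suc m - 0)) = (of_nat m + 2) * (fps_nth F (Suc (Suc m)) :: complex)"
  by (auto simp: algebra_simps)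

lemma lt_rad: "1 \<le> fps_conv_radius F \<Longrightarrow> norm z < 1 \<Longrightarrow> ereal (norm z) < fps_conv_radius F"
  by (rule order_less_le_trans[of _ 1]) auto

lemma C1: "(if Suc m < 1 then 0 else fps_nth F (Suc m - 1)) = (fps_nth F m :: complex)"
  by simp
lemma C0: "(if Suc m < 0 then 0 else fps_nth F (Suc m - 0)) = (fps_nth F (Suc m) :: complex)"
  by simp

lemma ode_alg:
  fixes z w1 wa wa1 V0 V1 V2 P \<gamma> \<delta> :: complex
  assumes "z \<noteq> 0" "w1 \<noteq> 0" "wa \<noteq> 0" "wa1 \<noteq> 0"
  shows "V2 + (\<gamma> / z + \<delta> / w1 + -1 / wa + 0 / wa1) * V1 + (wa1 * P) / (z * w1 * wa * wa1) * V0
     = (z * w1 * wa * V2 + (\<gamma> * w1 * wa + \<delta> * z * wa - z * w1) * V1 + P * V0) / (z * w1 * wa)"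
  using assms by (simp add: field_simps)

lemma dd: "d \<noteq> 0 \<Longrightarrow> (x/d)/(y/d) = (x/y::complex)"
  by (cases "y = 0") (simp_all add: field_simps)

lemma lim1: "(\<lambda>n. (p + of_nat n) / of_nat n :: complex) \<longlonglongrightarrow> 1"
proof -
  have "(\<lambda>n. 1 + p / of_nat n :: complex) \<longlonglongrightarrow> 1 + 0"
    by (intro tendsto_add tendsto_const tendsto_divide_0[OF tendsto_const] tendsto_of_nat)
  moreover have "\<forall>\<^sub>F n in sequentially. 1 + p / of_nat n = (p + of_nat n) / (of_nat n :: complex)"
    using eventually_gt_at_top[of 0] by eventually_elim (simp add: field_simps)
  ultimately show ?thesis using Lim_transform_eventually by fastforce
qed

theorem mainTheorem2:
  fixes a a\<^sub>1 \<alpha> \<beta> \<gamma> \<delta> \<epsilon> \<epsilon>\<^sub>1 e\<^sub>1 \<theta>\<^sub>0 \<theta>\<^sub>1 :: complex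
    and u :: "complex \<Rightarrow> complex"
  assumes ha: "a \<noteq> 0" "a \<noteq> 1"
    and ha1: "a\<^sub>1 \<noteq> 0" "a\<^sub>1 \<noteq> 1"
    and haa1: "a \<noteq> a\<^sub>1"
    and hgamma: "\<forall>n::nat. \<gamma> \<noteq> - of_nat n"
    and heps: "\<epsilon> = -1" and heps1: "\<epsilon>\<^sub>1 = 0"
    and hdelta: "\<delta> = 2 + \<alpha> + \<beta> - \<gamma>"
    and he1: "e\<^sub>1 \<noteq> 0" "\<forall>n::nat. e\<^sub>1 \<noteq> - of_nat (Suc n)"
    and he1eq: "a * (\<alpha> - e\<^sub>1) * (\<beta> - e\<^sub>1) + (\<gamma> - 1 - e\<^sub>1) * e\<^sub>1 = 0"
    and htheta0: "\<theta>\<^sub>0 = - a * a\<^sub>1 * \<alpha> * \<beta> * (1 + e\<^sub>1) / e\<^sub>1"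
    and htheta1: "\<theta>\<^sub>1 = a\<^sub>1 * \<alpha> * \<beta> - \<theta>\<^sub>0 / a\<^sub>1"
    and hu: "u = hypF [\<alpha>, \<beta>, 1 + e\<^sub>1] [\<gamma>, e\<^sub>1]"
  shows "u holomorphic_on ball 0 1 \<and>
    (\<forall>z. norm z < 1 \<and> z \<noteq> 0 \<and> z \<noteq> a \<and> z \<noteq> a\<^sub>1 \<longrightarrow>
       deriv (deriv u) z
       + (\<gamma> / z + \<delta> / (z - 1) + \<epsilon> / (z - a) + \<epsilon>\<^sub>1 / (z - a\<^sub>1)) * deriv u z
       + (\<alpha> * \<beta> * z\<^sup>2 - \<theta>\<^sub>1 * z - \<theta>\<^sub>0) / (z * (z - 1) * (z - a) * (z - a\<^sub>1)) * u z = 0)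
    \<and> \<theta>\<^sub>0\<^sup>2 / a\<^sub>1\<^sup>2 + (1 + a * (\<alpha> + \<beta> + 2 * \<alpha> * \<beta>) - \<gamma>) * (\<theta>\<^sub>0 / a\<^sub>1)
       + a * \<alpha> * \<beta> * (a * (1 + \<alpha>) * (1 + \<beta>) - \<gamma>) = 0"
proof -
  define c where "c = hyp_coeff [\<alpha>, \<beta>, 1 + e\<^sub>1] [\<gamma>, e\<^sub>1]"
  define C where "C = Abs_fps c"
  have u_eq: "u = eval_fps C" by (simp add: hu hypF_def eval_fps_def C_def c_def fun_eq_iff)
  have gnz: "\<gamma> + of_nat m \<noteq> 0" for m
    using hgamma[rule_format, of m] by (simp add: eq_neg_iff_add_eq_0)
  have enz: "e\<^sub>1 + of_nat m \<noteq> 0" for m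
  proof (cases m)
    case 0 thus ?thesis using he1 by simp
  next
    case (Suc k)
    show ?thesis
    proof
      assume "e\<^sub>1 + of_nat m = 0"
      have "e\<^sub>1 = (e\<^sub>1 + of_nat m) - of_nat m" by simp
      also have "\<dots> = - of_nat (Suc k)" using \<open>e\<^sub>1 + of_nat m = 0\<close> Suc by (simp only: diff_0)
      finally have "e\<^sub>1 = - of_nat (Suc k)" .
      with he1(2) show False by blast
    qed
  qed
  have csuc: "c (Suc m) = c m * ((\<alpha> + of_nat m) * (\<beta> + of_nat m) * (1 + e\<^sub>1 + of_nat m)) /
      ((of_nat m + 1) * (\<gamma> + of_nat m) * (e\<^sub>1 + of_nat m))" for m
    by (simp add: c_def algebra_simps)
  have rec: "c (Suc m) * ((of_nat m + 1) * (\<gamma> + of_nat m) * (e\<^sub>1 + of_nat m)) =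
      c m * ((\<alpha> + of_nat m) * (\<beta> + of_nat m) * (1 + e\<^sub>1 + of_nat m))" for m
  proof -
    have "(of_nat m + 1 :: complex) \<noteq> 0" by (metis of_nat_Suc of_nat_eq_0_iff nat.distinct(1) add.commute)
    with gnz[of m] enz[of m] show ?thesis by (simp add: csuc)
  qed
  define R where "R n = ((\<alpha> + of_nat n) * (\<beta> + of_nat n) * (1 + e\<^sub>1 + of_nat n)) /
      ((of_nat n + 1) * (\<gamma> + of_nat n) * (e\<^sub>1 + of_nat n))" for n
  have cR: "c (Suc n) = c n * R n" for n by (simp add: csuc R_def)
  define P where "P n = ((\<alpha> + of_nat n) / of_nat n) * ((\<beta> + of_nat n) / of_nat n) * ((1 + e\<^sub>1 + of_nat n) / of_nat n) /
      (((1 + of_nat n) / of_nat n) * ((\<gamma> + of_nat n) / of_nat n) * ((e\<^sub>1 + of_nat n) / of_nat n))" for n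
  have "P \<longlonglongrightarrow> 1 * 1 * 1 / (1 * 1 * 1)"
    unfolding P_def by (intro tendsto_intros lim1) auto
  hence Plim: "(\<lambda>n. norm (P n)) \<longlonglongrightarrow> 1" using tendsto_norm by fastforce
  have RP: "R n = P n" if "n \<ge> 1" for n
  proof -
    have nz: "(of_nat n :: complex) \<noteq> 0" using that by simp
    have "P n = ((\<alpha> + of_nat n) * (\<beta> + of_nat n) * (1 + e\<^sub>1 + of_nat n) / (of_nat n * of_nat n * of_nat n)) /
       ((1 + of_nat n) * (\<gamma> + of_nat n) * (e\<^sub>1 + of_nat n) / (of_nat n * of_nat n * of_nat n))"
      unfolding P_def by (simp only: times_divide_times_eq)
    also have "\<dots> = R n" unfolding R_def using nz
      by (subst dd) (auto simp: add.commute)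
    finally show ?thesis ..
  qed
  have rad: "fps_conv_radius C \<ge> 1"
    unfolding fps_conv_radius_def C_def fps_nth_Abs_fps
  proof (rule conv_radius_geI_ex')
    fix r :: real assume r: "0 < r" "ereal r < 1"
    hence r1: "r < 1" by simp
    define q where "q = (1 + 1 / r) / 2"
    have q1: "q > 1" using r r1 by (simp add: q_def field_simps)
    have qr: "q * r < 1" using r r1 by (simp add: q_def field_simps)
    have "\<forall>\<^sub>F n in sequentially. norm (P n) < q" using order_tendstoD(2)[OF Plim q1] .
    moreover have "\<forall>\<^sub>F n in sequentially. n \<ge> 1" by (rule eventually_ge_at_top)
    ultimately have "\<forall>\<^sub>F n in sequentially. norm (R n) < q" by eventually_elim (simp add: RP)
    then obtain N where N: "\<And>n. n \<ge> N \<Longrightarrow> norm (R n) < q" by (auto simp: eventually_sequentially)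
    show "summable (\<lambda>n. c n * of_real r ^ n)"
    proof (rule summable_ratio_test[of "q * r" N])
      show "q * r < 1" by (rule qr)
      fix n assume "n \<ge> N"
      hence "norm (R n) \<le> q" using N less_imp_le by blast
      hence "norm (c n) * norm (R n) * r ^ Suc n \<le> norm (c n) * q * r ^ Suc n"
        using r by (intro mult_right_mono mult_left_mono) auto
      thus "norm (c (Suc n) * of_real r ^ Suc n) \<le> q * r * norm (c n * of_real r ^ n)"
        using r by (simp add: cR norm_mult norm_power algebra_simps)
    qed
  qed
  define D1 where "D1 = fps_deriv C"
  define D2 where "D2 = fps_deriv D1"
  have rad1: "fps_conv_radius D1 \<ge> 1" unfolding D1_def using fps_conv_radius_deriv[of C] rad by (rule order_trans[rotated])
  have rad2: "fps_conv_radius D2 \<ge> 1" unfolding D2_def using fps_conv_radius_deriv[of D1] rad1 by (rule order_trans[rotated])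
  define t where "t = \<theta>\<^sub>0 / a\<^sub>1"
  have et: "e\<^sub>1 * t = - a * \<alpha> * \<beta> * (1 + e\<^sub>1)"
    using ha1 he1 by (simp add: t_def htheta0 field_simps)
  define E where "E = Tm 1 3 D2 + (Tm (-(1+a)) 2 D2 + (Tm a 1 D2 + (Tm (1+\<alpha>+\<beta>) 2 D1 +
     (Tm (1 - \<gamma>*(1+a) - \<delta>*a) 1 D1 + (Tm (\<gamma>*a) 0 D1 + (Tm (\<alpha>*\<beta>) 1 C + Tm t 0 C))))))"
  have E0: "E = 0"
  proof (rule fps_ext)
    fix n show "fps_nth E n = fps_nth 0 n"
    proof (cases n)
      case 0
      have "fps_nth E 0 = \<gamma> * a * c 1 + t"
        by (simp add: E_def nth_Tm D1_def D2_def C_def c_def)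
      also have "c 1 = \<alpha> * \<beta> * (1 + e\<^sub>1) / (\<gamma> * e\<^sub>1)"
        by (simp add: c_def)
      also have "t = - a * \<alpha> * \<beta> * (1 + e\<^sub>1) / e\<^sub>1" using et he1(1) by (simp add: field_simps)
      finally show ?thesis using 0 gnz[of 0] he1(1) by (simp add: field_simps)
    next
      case (Suc m)
      define M where "M = (of_nat m :: complex)"
      have X: "fps_nth E (Suc m) = 1 * (of_nat m * (of_nat m - 1) * c m) + - (1 + a) * ((of_nat m + 1) * of_nat m * c (Suc m))
        + a * ((of_nat m + 1) * (of_nat m + 2) * c (Suc (Suc m))) + (1 + \<alpha> + \<beta>) * (of_nat m * c m)
        + (1 - \<gamma> * (1 + a) - \<delta> * a) * ((of_nat m + 1) * c (Suc m)) + \<gamma> * a * ((of_nat m + 2) * c (Suc (Suc m)))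
        + \<alpha> * \<beta> * c m + t * c (Suc m)"
        unfolding E_def fps_add_nth nth_Tm D2_def D1_def
        by (simp only: A3 A2 A1, simp only: B2 B1 B0, simp only: C1 C0, simp only: C_def fps_nth_Abs_fps add.assoc)
      define r0 where "r0 = c (Suc m) * ((M + 1) * (\<gamma> + M) * (e\<^sub>1 + M)) - c m * ((\<alpha> + M) * (\<beta> + M) * (1 + e\<^sub>1 + M))"
      define r1 where "r1 = c (Suc (Suc m)) * ((M + 2) * (\<gamma> + M + 1) * (e\<^sub>1 + M + 1)) - c (Suc m) * ((\<alpha> + M + 1) * (\<beta> + M + 1) * (1 + e\<^sub>1 + M + 1))"
      define EE where "EE = a * (\<alpha> - e\<^sub>1) * (\<beta> - e\<^sub>1) + (\<gamma> - 1 - e\<^sub>1) * e\<^sub>1"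
      define tt where "tt = e\<^sub>1 * t + a * \<alpha> * \<beta> * (1 + e\<^sub>1)"
      have r00: "r0 = 0" using rec[of m] by (simp add: r0_def M_def)
      have r10: "r1 = 0" using rec[of "Suc m"] by (simp add: r1_def M_def algebra_simps)
      have EE0: "EE = 0" using he1eq by (simp add: EE_def)
      have tt0: "tt = 0" using et by (simp add: tt_def)
      have "e\<^sub>1 * (e\<^sub>1 + M + 1) * fps_nth E (Suc m) = - e\<^sub>1 * r0 + a * e\<^sub>1 * r1 + c (Suc m) * (- (M + 1) * EE + (e\<^sub>1 + M + 1) * tt)"
        unfolding X r0_def r1_def EE_def tt_def hdelta M_def[symmetric] by algebra
      also have "\<dots> = 0" by (simp add: r00 r10 EE0 tt0)
      finally have "e\<^sub>1 * (e\<^sub>1 + M + 1) * fps_nth E (Suc m) = 0" .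
      moreover have "e\<^sub>1 + M + 1 \<noteq> 0" using enz[of "Suc m"] by (simp add: M_def algebra_simps)
      ultimately show ?thesis using he1(1) Suc by simp
    qed
  qed
  have ode: "deriv (deriv u) z
       + (\<gamma> / z + \<delta> / (z - 1) + \<epsilon> / (z - a) + \<epsilon>\<^sub>1 / (z - a\<^sub>1)) * deriv u z
       + (\<alpha> * \<beta> * z\<^sup>2 - \<theta>\<^sub>1 * z - \<theta>\<^sub>0) / (z * (z - 1) * (z - a) * (z - a\<^sub>1)) * u z = 0"
    if z: "norm z < 1" "z \<noteq> 0" "z \<noteq> a" "z \<noteq> a\<^sub>1" for z
  proof -
    have z1: "z - 1 \<noteq> 0" using z(1) by auto
    have za: "z - a \<noteq> 0" "z - a\<^sub>1 \<noteq> 0" using z by auto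
    have d1w: "deriv u w = eval_fps D1 w" if "norm w < 1" for w
      unfolding u_eq D1_def using eval_fps_deriv[OF lt_rad[OF rad that]] by simp
    have d1: "deriv u z = eval_fps D1 z" by (rule d1w[OF z(1)])
    have "deriv (deriv u) z = deriv (eval_fps D1) z"
    proof (rule deriv_cong_ev[OF _ refl])
      have "\<forall>\<^sub>F w in nhds z. w \<in> ball 0 1" by (rule eventually_nhds_in_open) (use z(1) in auto)
      thus "\<forall>\<^sub>F w in nhds z. deriv u w = eval_fps D1 w" by eventually_elim (simp add: d1w)
    qed
    also have "\<dots> = eval_fps D2 z" unfolding D2_def using eval_fps_deriv[OF lt_rad[OF rad1 z(1)]] by simp
    finally have d2: "deriv (deriv u) z = eval_fps D2 z" .
    have u0: "u z = eval_fps C z" by (simp add: u_eq)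
    have "eval_fps E z = 1 * z ^ 3 * eval_fps D2 z + (- (1 + a) * z ^ 2 * eval_fps D2 z + (a * z ^ 1 * eval_fps D2 z
      + ((1 + \<alpha> + \<beta>) * z ^ 2 * eval_fps D1 z + ((1 - \<gamma> * (1 + a) - \<delta> * a) * z ^ 1 * eval_fps D1 z
      + (\<gamma> * a * z ^ 0 * eval_fps D1 z + (\<alpha> * \<beta> * z ^ 1 * eval_fps C z + t * z ^ 0 * eval_fps C z))))))"
      unfolding E_def using rad rad1 rad2 z(1)
      by (simp only: eval_add good_add good_Tm eval_Tm)
    hence S: "1 * z ^ 3 * eval_fps D2 z + (- (1 + a) * z ^ 2 * eval_fps D2 z + (a * z ^ 1 * eval_fps D2 z
      + ((1 + \<alpha> + \<beta>) * z ^ 2 * eval_fps D1 z + ((1 - \<gamma> * (1 + a) - \<delta> * a) * z ^ 1 * eval_fps D1 z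
      + (\<gamma> * a * z ^ 0 * eval_fps D1 z + (\<alpha> * \<beta> * z ^ 1 * eval_fps C z + t * z ^ 0 * eval_fps C z)))))) = 0"
      using E0 by simp
    have th0: "\<theta>\<^sub>0 = t * a\<^sub>1" using ha1 by (simp add: t_def)
    have num: "\<alpha> * \<beta> * z\<^sup>2 - \<theta>\<^sub>1 * z - \<theta>\<^sub>0 = (z - a\<^sub>1) * (\<alpha> * \<beta> * z + t)"
      unfolding htheta1 th0 using ha1 by (simp add: field_simps power2_eq_square)
    define V2 where "V2 = eval_fps D2 z"
    define V1 where "V1 = eval_fps D1 z"
    define V0 where "V0 = eval_fps C z"
    have S': "z * (z - 1) * (z - a) * V2 + (\<gamma> * (z - 1) * (z - a) + \<delta> * z * (z - a) - z * (z - 1)) * V1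
       + (\<alpha> * \<beta> * z + t) * V0 = 0"
      using S unfolding V2_def[symmetric] V1_def[symmetric] V0_def[symmetric]
      by (simp add: hdelta algebra_simps power2_eq_square power3_eq_cube)
    have "deriv (deriv u) z
       + (\<gamma> / z + \<delta> / (z - 1) + \<epsilon> / (z - a) + \<epsilon>\<^sub>1 / (z - a\<^sub>1)) * deriv u z
       + (\<alpha> * \<beta> * z\<^sup>2 - \<theta>\<^sub>1 * z - \<theta>\<^sub>0) / (z * (z - 1) * (z - a) * (z - a\<^sub>1)) * u z
       = (z * (z - 1) * (z - a) * V2 + (\<gamma> * (z - 1) * (z - a) + \<delta> * z * (z - a) - z * (z - 1)) * V1
       + (\<alpha> * \<beta> * z + t) * V0) / (z * (z - 1) * (z - a))"
      unfolding d1 d2 u0 num V2_def[symmetric] V1_def[symmetric] V0_def[symmetric] heps heps1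
      by (rule ode_alg) (use z(2) z1 za in auto)
    also have "\<dots> = 0" using S' by simp
    finally show ?thesis .
  qed
  have quad: "\<theta>\<^sub>0\<^sup>2 / a\<^sub>1\<^sup>2 + (1 + a * (\<alpha> + \<beta> + 2 * \<alpha> * \<beta>) - \<gamma>) * (\<theta>\<^sub>0 / a\<^sub>1)
       + a * \<alpha> * \<beta> * (a * (1 + \<alpha>) * (1 + \<beta>) - \<gamma>) = 0"
  proof -
    have "\<theta>\<^sub>0\<^sup>2 / a\<^sub>1\<^sup>2 = t^2" by (simp add: t_def power_divide)
    moreover have "e\<^sub>1^2 * (t^2 + (1 + a * (\<alpha> + \<beta> + 2 * \<alpha> * \<beta>) - \<gamma>) * t
       + a * \<alpha> * \<beta> * (a * (1 + \<alpha>) * (1 + \<beta>) - \<gamma>)) = 0"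
    proof -
      have "e\<^sub>1^2 * (t^2 + (1 + a * (\<alpha> + \<beta> + 2 * \<alpha> * \<beta>) - \<gamma>) * t
       + a * \<alpha> * \<beta> * (a * (1 + \<alpha>) * (1 + \<beta>) - \<gamma>)) = (e\<^sub>1 * t)^2 + (1 + a * (\<alpha> + \<beta> + 2 * \<alpha> * \<beta>) - \<gamma>) * e\<^sub>1 * (e\<^sub>1 * t)
       + e\<^sub>1^2 * (a * \<alpha> * \<beta> * (a * (1 + \<alpha>) * (1 + \<beta>) - \<gamma>))"
        by (simp add: power2_eq_square algebra_simps)
      also have "\<dots> = a * \<alpha> * \<beta> * (a * (\<alpha> - e\<^sub>1) * (\<beta> - e\<^sub>1) + (\<gamma> - 1 - e\<^sub>1) * e\<^sub>1)"
        unfolding et by (simp add: power2_eq_square algebra_simps)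
      finally show ?thesis using he1eq by simp
    qed
    ultimately show ?thesis using he1(1) by (simp add: t_def)
  qed
  have hol: "u holomorphic_on ball 0 1"
    unfolding u_eq by (rule holomorphic_on_eval_fps) (use rad in \<open>auto simp: subset_iff intro: lt_rad\<close>)
  show ?thesis using hol ode quad by blast
qed

end
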